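(* Let $\oplus$ be a combinator. Then: (1) $\oplus$ satisfies ($\oplus$UB): $\min(\preceq_{1\oplus 2}, S) \subseteq \min(\preceq_1, S) \cup \min(\preceq_2, S)$ for all $S \subseteq W$ and all pairs in its domain, if and only if it satisfies ($\oplus$SPU+): for all $x,y,z \in W$, if $x \prec_1 y$ and $z \prec_2 y$ then $x \prec_{1\oplus 2} y$ or $z \prec_{1\oplus 2} y$. (2) $\oplus$ satisfies ($\oplus$LB): for all $S \subseteq W$, either $\min(\preceq_1, S) \subseteq \min(\preceq_{1\oplus 2}, S)$ or $\min(\preceq_2, S) \subseteq \min(\preceq_{1\oplus 2}, S)$, if and only if it satisfies ($\oplus$WPU+): for all $x,y,z \in W$, if $x \preceq_1 y$ and $z \preceq_2 y$ then $x \preceq_{1\oplus 2} y$ or $z \preceq_{1\oplus 2} y$. (All conditions are required for every pair $\langle \preceq_1, \preceq_2\rangle$ in the domain of $\oplus$.)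
   Context: $W$ is a finite nonempty set (of possible worlds). A tpo is a total preorder on $W$; for a tpo $\preceq$, $\prec$ is its strict part and $\sim$ its symmetric part. For $S \subseteq W$, $\min(\preceq, S) = \{x \in S : x \preceq y \text{ for all } y \in S\}$. A combinator is a function $\oplus$ taking pairs of tpos $\langle \preceq_1, \preceq_2\rangle$ (from its domain) to a tpo $\preceq_1 \oplus \preceq_2$, written $\preceq_{1\oplus 2}$, with strict part $\prec_{1\oplus 2}$. *)

theory Defs
  imports Main
begin

text \<open>The set W of possible worlds is modelled as a finite type 'w (nonempty automatically).
A preorder on W is a relation of type 'w rel; (x,y) \<in> R means x \<preceq> y.\<close>

definition tpo :: "'w rel \<Rightarrow> bool" where
  "tpo R \<longleftrightarrow> (\<forall>x y. (x,y) \<in> R \<or> (y,x) \<in> R) \<and> trans R"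

definition strict_part :: "'w rel \<Rightarrow> 'w rel" where
  "strict_part R = {(x,y). (x,y) \<in> R \<and> (y,x) \<notin> R}"

definition minset :: "'w rel \<Rightarrow> 'w set \<Rightarrow> 'w set" where
  "minset R S = {x \<in> S. \<forall>y \<in> S. (x,y) \<in> R}"

definition combinator :: "('w rel \<times> 'w rel) set \<Rightarrow> ('w rel \<Rightarrow> 'w rel \<Rightarrow> 'w rel) \<Rightarrow> bool" where
  "combinator D f \<longleftrightarrow> (\<forall>(R1,R2) \<in> D. tpo R1 \<and> tpo R2 \<and> tpo (f R1 R2))"

end

theory Submission
  imports Defs
begin

lemma tpo_refl: "tpo R \<Longrightarrow> (x,x) \<in> R"
  unfolding tpo_def by blast

lemma tpo_trans: "tpo R \<Longrightarrow> (x,y) \<in> R \<Longrightarrow> (y,z) \<in> R \<Longrightarrow> (x,z) \<in> R"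
  unfolding tpo_def trans_def by blast

lemma tpo_tot: "tpo R \<Longrightarrow> (x,y) \<notin> R \<Longrightarrow> (y,x) \<in> R"
  unfolding tpo_def by blast

lemma minset_ne: assumes "tpo R" "finite S" "S \<noteq> {}" shows "minset R S \<noteq> {}"
  using assms(2,3)
proof (induction S rule: finite_ne_induct)
  case (singleton x) then show ?case using tpo_refl[OF assms(1)] by (auto simp: minset_def)
next
  case (insert x F)
  then obtain m where m: "m \<in> minset R F" by blast
  show ?case
  proof (cases "(m,x) \<in> R")
    case True then show ?thesis using m by (auto simp: minset_def)
  next
    case False
    then have "(x,m) \<in> R" using tpo_tot[OF assms(1)] by blast
    have "\<forall>v\<in>F. (m,v) \<in> R" using m by (simp add: minset_def)
    then have "\<forall>v\<in>F. (x,v) \<in> R" using \<open>(x,m) \<in> R\<close> tpo_trans[OF assms(1)] by blast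
    then have "x \<in> minset R (insert x F)" using tpo_refl[OF assms(1)]
      by (simp add: minset_def)
    then show ?thesis by blast
  qed
qed

lemma part1:
  fixes R1 R2 R :: "'w::finite rel"
  assumes t1: "tpo R1" and t2: "tpo R2" and t: "tpo R"
  shows "(\<forall>S. minset R S \<subseteq> minset R1 S \<union> minset R2 S) \<longleftrightarrow>
     (\<forall>x y z. (x,y) \<in> strict_part R1 \<and> (z,y) \<in> strict_part R2
                \<longrightarrow> (x,y) \<in> strict_part R \<or> (z,y) \<in> strict_part R)"
proof
  assume H: "\<forall>S. minset R S \<subseteq> minset R1 S \<union> minset R2 S"
  show "\<forall>x y z. (x,y) \<in> strict_part R1 \<and> (z,y) \<in> strict_part R2
                \<longrightarrow> (x,y) \<in> strict_part R \<or> (z,y) \<in> strict_part R"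
  proof (intro allI impI)
    fix x y z assume a: "(x,y) \<in> strict_part R1 \<and> (z,y) \<in> strict_part R2"
    show "(x,y) \<in> strict_part R \<or> (z,y) \<in> strict_part R"
    proof (rule ccontr)
      assume "\<not> ?thesis"
      then have "(y,x) \<in> R" "(y,z) \<in> R" using tpo_tot[OF t] unfolding strict_part_def by blast+
      then have "y \<in> minset R {x,y,z}" using tpo_refl[OF t] by (auto simp: minset_def)
      then have "y \<in> minset R1 {x,y,z} \<union> minset R2 {x,y,z}" using H by blast
      then show False using a by (auto simp: minset_def strict_part_def)
    qed
  qed
next
  assume H: "\<forall>x y z. (x,y) \<in> strict_part R1 \<and> (z,y) \<in> strict_part R2
                \<longrightarrow> (x,y) \<in> strict_part R \<or> (z,y) \<in> strict_part R"
  show "\<forall>S. minset R S \<subseteq> minset R1 S \<union> minset R2 S"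
  proof (intro allI subsetI)
    fix S y assume y: "y \<in> minset R S"
    show "y \<in> minset R1 S \<union> minset R2 S"
    proof (rule ccontr)
      assume "\<not> ?thesis"
      then obtain x z where "x \<in> S" "z \<in> S" "(y,x) \<notin> R1" "(y,z) \<notin> R2"
        using y by (auto simp: minset_def)
      then have "(x,y) \<in> strict_part R1" "(z,y) \<in> strict_part R2"
        using tpo_tot[OF t1] tpo_tot[OF t2] unfolding strict_part_def by blast+
      then have "(x,y) \<in> strict_part R \<or> (z,y) \<in> strict_part R" using H by blast
      then show False using y \<open>x \<in> S\<close> \<open>z \<in> S\<close> by (auto simp: minset_def strict_part_def)
    qed
  qed
qed

lemma part2:
  fixes R1 R2 R :: "'w::finite rel"
  assumes t1: "tpo R1" and t2: "tpo R2" and t: "tpo R"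
  shows "(\<forall>S. minset R1 S \<subseteq> minset R S \<or> minset R2 S \<subseteq> minset R S) \<longleftrightarrow>
     (\<forall>x y z. (x,y) \<in> R1 \<and> (z,y) \<in> R2 \<longrightarrow> (x,y) \<in> R \<or> (z,y) \<in> R)"
proof
  assume H: "\<forall>S. minset R1 S \<subseteq> minset R S \<or> minset R2 S \<subseteq> minset R S"
  show "\<forall>x y z. (x,y) \<in> R1 \<and> (z,y) \<in> R2 \<longrightarrow> (x,y) \<in> R \<or> (z,y) \<in> R"
  proof (intro allI impI)
    fix x y z assume a: "(x,y) \<in> R1 \<and> (z,y) \<in> R2"
    show "(x,y) \<in> R \<or> (z,y) \<in> R"
    proof (rule ccontr)
      assume c: "\<not> ?thesis"
      have xy: "x \<noteq> y" "z \<noteq> y" using c tpo_refl[OF t] by auto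
      have mR: "minset R {x,y,z} \<subseteq> {y}" using c by (auto simp: minset_def)
      have n1: "minset R1 {x,y,z} \<noteq> {}" by (rule minset_ne[OF t1]) auto
      have n2: "minset R2 {x,y,z} \<noteq> {}" by (rule minset_ne[OF t2]) auto
      have gen: "u \<in> minset Q T"
        if tq: "tpo Q" and xyq: "(u,y) \<in> Q" and uT: "u \<in> T" and sub: "minset Q T \<subseteq> {y}"
          and nq: "minset Q T \<noteq> {}" for Q u T
      proof -
        have "y \<in> minset Q T" using sub nq by blast
        then have "\<forall>v\<in>T. (y,v) \<in> Q" by (simp add: minset_def)
        then have "\<forall>v\<in>T. (u,v) \<in> Q" using xyq tpo_trans[OF tq] by blast
        then show ?thesis using uT by (simp add: minset_def)
      qed
      from H have "minset R1 {x,y,z} \<subseteq> minset R {x,y,z} \<or> minset R2 {x,y,z} \<subseteq> minset R {x,y,z}" by blast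
      then show False
      proof
        assume "minset R1 {x,y,z} \<subseteq> minset R {x,y,z}"
        then have s: "minset R1 {x,y,z} \<subseteq> {y}" using mR by blast
        have "x \<in> minset R1 {x,y,z}" using gen[OF t1 _ _ s n1] a by blast
        then show False using s xy by blast
      next
        assume "minset R2 {x,y,z} \<subseteq> minset R {x,y,z}"
        then have s: "minset R2 {x,y,z} \<subseteq> {y}" using mR by blast
        have "z \<in> minset R2 {x,y,z}" using gen[OF t2 _ _ s n2] a by blast
        then show False using s xy by blast
      qed
    qed
  qed
next
  assume H: "\<forall>x y z. (x,y) \<in> R1 \<and> (z,y) \<in> R2 \<longrightarrow> (x,y) \<in> R \<or> (z,y) \<in> R"
  show "\<forall>S. minset R1 S \<subseteq> minset R S \<or> minset R2 S \<subseteq> minset R S"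
  proof (rule allI, rule ccontr)
    fix S assume "\<not> (minset R1 S \<subseteq> minset R S \<or> minset R2 S \<subseteq> minset R S)"
    then obtain a b where a: "a \<in> minset R1 S" "a \<notin> minset R S"
      and b: "b \<in> minset R2 S" "b \<notin> minset R S" by blast
    have "S \<noteq> {}" using a by (auto simp: minset_def)
    then obtain m where m: "m \<in> minset R S" using minset_ne[OF t finite] by blast
    have "(a,m) \<in> R1" "(b,m) \<in> R2" using a b m by (auto simp: minset_def)
    then have "(a,m) \<in> R \<or> (b,m) \<in> R" using H by blast
    moreover have "\<forall>v\<in>S. (m,v) \<in> R" using m by (simp add: minset_def)
    ultimately have "(\<forall>v\<in>S. (a,v) \<in> R) \<or> (\<forall>v\<in>S. (b,v) \<in> R)" using tpo_trans[OF t] by blast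
    then show False using a b unfolding minset_def by blast
  qed
qed

theorem proposition3:
  fixes D :: "('w::finite rel \<times> 'w rel) set"
    and f :: "'w rel \<Rightarrow> 'w rel \<Rightarrow> 'w rel"
  assumes "combinator D f"
  shows "((\<forall>(R1,R2) \<in> D. \<forall>S. minset (f R1 R2) S \<subseteq> minset R1 S \<union> minset R2 S)
         \<longleftrightarrow> (\<forall>(R1,R2) \<in> D. \<forall>x y z. (x,y) \<in> strict_part R1 \<and> (z,y) \<in> strict_part R2
                \<longrightarrow> (x,y) \<in> strict_part (f R1 R2) \<or> (z,y) \<in> strict_part (f R1 R2)))
       \<and> ((\<forall>(R1,R2) \<in> D. \<forall>S. minset R1 S \<subseteq> minset (f R1 R2) S \<or> minset R2 S \<subseteq> minset (f R1 R2) S)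
         \<longleftrightarrow> (\<forall>(R1,R2) \<in> D. \<forall>x y z. (x,y) \<in> R1 \<and> (z,y) \<in> R2
                \<longrightarrow> (x,y) \<in> f R1 R2 \<or> (z,y) \<in> f R1 R2))"
proof -
  have T: "\<And>R1 R2. (R1,R2) \<in> D \<Longrightarrow> tpo R1 \<and> tpo R2 \<and> tpo (f R1 R2)"
    using assms unfolding combinator_def by blast
  show ?thesis
  proof (rule conjI; rule ball_cong[OF refl])
    fix p assume p: "p \<in> D"
    obtain R1 R2 where pe: "p = (R1,R2)" by (cases p)
    have t: "tpo R1" "tpo R2" "tpo (f R1 R2)" using T p pe by blast+
    show "(case p of (R1, R2) \<Rightarrow> \<forall>S. minset (f R1 R2) S \<subseteq> minset R1 S \<union> minset R2 S) =
      (case p of (R1, R2) \<Rightarrow> \<forall>x y z. (x,y) \<in> strict_part R1 \<and> (z,y) \<in> strict_part R2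
                \<longrightarrow> (x,y) \<in> strict_part (f R1 R2) \<or> (z,y) \<in> strict_part (f R1 R2))"
      unfolding pe split using t by (rule part1)
  next
    fix p assume p: "p \<in> D"
    obtain R1 R2 where pe: "p = (R1,R2)" by (cases p)
    have t: "tpo R1" "tpo R2" "tpo (f R1 R2)" using T p pe by blast+
    show "(case p of (R1, R2) \<Rightarrow> \<forall>S. minset R1 S \<subseteq> minset (f R1 R2) S \<or> minset R2 S \<subseteq> minset (f R1 R2) S) =
      (case p of (R1, R2) \<Rightarrow> \<forall>x y z. (x,y) \<in> R1 \<and> (z,y) \<in> R2
                \<longrightarrow> (x,y) \<in> f R1 R2 \<or> (z,y) \<in> f R1 R2)"
      unfolding pe split using t by (rule part2)
  qed
qed

end
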